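(* For all integers $m,n\ge 0$, $$\binom{m+n}{m}H_{n+m}=\sum_{k=0}^{n}H_k\binom{m+n-k-1}{n-k}+H_m\binom{n+m}{n},$$ where $H_j$ denotes the $j$-th harmonic number.
   Context: The harmonic numbers are $H_0=0$ and $H_j=1+\frac12+\cdots+\frac1j$ for $j\ge 1$. Binomial coefficients are the generalized ones: for any integer $a$ (possibly negative) and integer $j\ge 0$, $\binom{a}{j}=\frac{a(a-1)\cdots(a-j+1)}{j!}$, with $\binom{a}{0}=1$; in particular $\binom{-1}{0}=1$. *)

theory Defs
  imports "HOL-Analysis.Analysis"
begin

end

theory Submission
  imports Defs
begin

lemma harm0 [simp]: "harm 0 = 0" by (simp add: harm_def)
lemma harm1 [simp]: "harm (Suc 0) = 1" by (simp add: harm_def)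

definition FF :: "nat \<Rightarrow> nat \<Rightarrow> real" where
  "FF p n = (\<Sum>k=0..n. harm k * real (p + n - k choose (n - k)))"

definition GG :: "nat \<Rightarrow> nat \<Rightarrow> real" where
  "GG p n = real (Suc p + n choose n) * (harm (Suc p + n) - harm (Suc p))"

lemma FF_rec: "FF (Suc q) (Suc n) = FF q (Suc n) + FF (Suc q) n"
proof -
  have "FF (Suc q) (Suc n) = (\<Sum>k=0..n. harm k * real (Suc q + Suc n - k choose (Suc n - k))) + harm (Suc n)"
    unfolding FF_def by simp
  also have "(\<Sum>k=0..n. harm k * real (Suc q + Suc n - k choose (Suc n - k)))
     = (\<Sum>k=0..n. harm k * real (q + Suc n - k choose (Suc n - k)))
       + (\<Sum>k=0..n. harm k * real (Suc q + n - k choose (n - k)))"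
  proof -
    have "\<And>k. k \<in> {0..n} \<Longrightarrow> harm k * real (Suc q + Suc n - k choose (Suc n - k))
       = harm k * real (q + Suc n - k choose (Suc n - k)) + harm k * real (Suc q + n - k choose (n - k))"
    proof -
      fix k assume "k \<in> {0..n}"
      then have k: "k \<le> n" by simp
      have e1: "Suc q + Suc n - k = Suc (q + Suc n - k)" using k by simp
      have e2: "Suc n - k = Suc (n - k)" using k by simp
      have "Suc q + Suc n - k choose (Suc n - k) = (q + Suc n - k choose (n - k)) + (q + Suc n - k choose (Suc n - k))"
        unfolding e1 e2 by simp
      moreover have "q + Suc n - k = Suc q + n - k" by simp
      ultimately show "?thesis k" by (simp add: algebra_simps)
    qed
    then show ?thesis by (simp add: sum.distrib)
  qed
  also have "\<dots> + harm (Suc n) = FF q (Suc n) + FF (Suc q) n"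
    unfolding FF_def by simp
  finally show ?thesis .
qed

lemma GG_rec: "GG (Suc q) (Suc n) = GG q (Suc n) + GG (Suc q) n"
proof -
  define T where "T = q + n + 3"
  have pas: "(T choose Suc n) = (T - 1 choose Suc n) + (T - 1 choose n)"
  proof -
    obtain S where S: "T = Suc S" unfolding T_def by auto
    then have "T - 1 = S" by simp
    then show ?thesis using binomial_Suc_Suc[of S n] S by (simp add: add.commute)
  qed
  have ab: "(T - Suc n) * (T choose Suc n) = T * (T - 1 choose Suc n)"
    by (rule binomial_absorb_comp)
  have tq: "T - Suc n = q + 2" unfolding T_def by simp
  have ab': "real (q+2) * real (T choose Suc n) = real T * real (T - 1 choose Suc n)"
    using ab unfolding tq by (metis of_nat_mult)
  have hT: "harm T = harm (T - 1) + 1 / (real T :: real)"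
  proof -
    have "T = Suc (Suc (Suc (q+n)))" "T - 1 = Suc (Suc (q+n))" unfolding T_def by simp_all
    then show ?thesis using harm_Suc[of "Suc (Suc (q+n))", where 'a=real] by (simp add: field_simps)
  qed
  have hq: "harm (Suc (Suc q)) = (harm (Suc q) :: real) + 1 / real (q+2)"
    using harm_Suc[of "Suc q", where 'a=real] by (simp add: field_simps)
  have g1: "GG (Suc q) (Suc n) = real (T choose Suc n) * (harm T - harm (Suc (Suc q)))"
    unfolding GG_def T_def by (simp add: numeral_eq_Suc)
  have g2: "GG q (Suc n) = real (T - 1 choose Suc n) * (harm (T - 1) - harm (Suc q))"
    unfolding GG_def T_def by (simp add: numeral_eq_Suc)
  have g3: "GG (Suc q) n = real (T - 1 choose n) * (harm (T - 1) - harm (Suc (Suc q)))"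
    unfolding GG_def T_def by (simp add: numeral_eq_Suc)
  have Tpos: "real T > 0" unfolding T_def by simp
  have "real (T choose Suc n) / real T = real (T - 1 choose Suc n) / real (q+2)"
    using ab' Tpos by (simp add: field_simps)
  then show ?thesis
    unfolding g1 g2 g3 hT hq pas of_nat_add
    by (simp add: algebra_simps add_divide_distrib)
qed

lemma FF_base1: "FF p 0 = GG p 0"
  unfolding FF_def GG_def by simp

lemma FF_base2: "FF 0 n = GG 0 n"
proof (induction n)
  case 0 then show ?case by (rule FF_base1)
next
  case (Suc n)
  have "FF 0 (Suc n) = FF 0 n + harm (Suc n)" unfolding FF_def by simp
  also have "\<dots> = real (Suc n) * (harm (Suc n) - 1) + harm (Suc n)"
    using Suc unfolding GG_def by simp
  also have "\<dots> = GG 0 (Suc n)"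
    unfolding GG_def using harm_Suc[of "Suc n", where 'a=real]
    by (simp add: field_simps)
  finally show ?case .
qed

lemma FF_GG: "FF p n = GG p n"
proof (induction n arbitrary: p)
  case 0 then show ?case by (rule FF_base1)
next
  case (Suc n)
  note IH = Suc.IH
  show ?case
  proof (induction p)
    case 0 then show ?case by (rule FF_base2)
  next
    case (Suc q)
    then show ?case using FF_rec GG_rec IH[of "Suc q"] by simp
  qed
qed

theorem theorem2p2:
  fixes m n :: nat
  shows "real (m + n choose m) * harm (n + m) =
    (\<Sum>k=0..n. harm k * ((real_of_int (int m + int n - int k - 1)) gchoose (n - k)))
    + harm m * real (n + m choose n)"
proof (cases m)
  case 0
  have "(\<Sum>k=0..n. harm k * ((real_of_int (int n - int k - 1)) gchoose (n - k)))
      = (\<Sum>k=0..n. if k = n then harm n else 0)"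
  proof (rule sum.cong)
    fix k assume "k \<in> {0..n}"
    then have k: "k \<le> n" by simp
    show "harm k * ((real_of_int (int n - int k - 1)) gchoose (n - k)) = (if k = n then harm n else 0)"
    proof (cases "k = n")
      case True then show ?thesis by simp
    next
      case False
      then have "real_of_int (int n - int k - 1) = real (n - k - 1)" using k by simp
      then have "(real_of_int (int n - int k - 1)) gchoose (n - k) = real (n - k - 1 choose (n - k))"
        by (simp add: binomial_gbinomial)
      also have "\<dots> = 0" using False k by simp
      finally show ?thesis using False by simp
    qed
  qed simp
  then show ?thesis using 0 by simp
next
  case (Suc p)
  have "(\<Sum>k=0..n. harm k * ((real_of_int (int m + int n - int k - 1)) gchoose (n - k))) = FF p n"
    unfolding FF_def
  proof (rule sum.cong)
    fix k assume "k \<in> {0..n}"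
    then have k: "k \<le> n" by simp
    have "real_of_int (int m + int n - int k - 1) = real (p + n - k)" using k Suc by simp
    then show "harm k * ((real_of_int (int m + int n - int k - 1)) gchoose (n - k)) =
      harm k * real (p + n - k choose (n - k))" by (simp add: binomial_gbinomial)
  qed simp
  also have "\<dots> = GG p n" by (rule FF_GG)
  finally have fin: "(\<Sum>k=0..n. harm k * ((real_of_int (int m + int n - int k - 1)) gchoose (n - k)))
     = real (Suc p + n choose n) * (harm (Suc p + n) - harm (Suc p))" unfolding GG_def .
  have sym: "m + n choose m = n + m choose n"
    using binomial_symmetric[of m "m+n"] by (simp add: add.commute)
  show ?thesis unfolding fin sym using Suc by (simp add: algebra_simps)
qed

end
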